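(* Let $X\subset\mathbb{R}^d$ be compact with Lebesgue measure $\mu$, and let $\mathcal{D}$ be a set of real functions on $X$ which contains, for every probability measure $\mathbb{R}$ on $X$ absolutely continuous with respect to $\mu$ with piecewise continuous density $f_\mathbb{R}$, every $m\ge2$ and every sequence $0=\alpha_1<\dots<\alpha_m$, the indicator functions $\mathbf{1}_{A_i(\mathbb{R})}$, $i=1,\dots,m-1$, where $A_i(\mathbb{R})=\{x\in X:f_\mathbb{R}(x)\ge\alpha_i\}\setminus\{x\in X: f_\mathbb{R}(x)\ge\alpha_{i+1}\}$. If $\mathbb{P},\mathbb{Q}$ are two such probability measures with $\int\phi\,d\mathbb{P}=\int\phi\,d\mathbb{Q}$ for all $\phi\in\mathcal{D}$, then $\mathbb{P}=\mathbb{Q}$.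
   Context: A probability measure is regarded as the linear functional $\phi\mapsto\langle\mathbb{P},\phi\rangle=\int\phi\,d\mathbb{P}$ on a space of test functions $\mathcal{D}$; $\mathbb{P}$ and $\mathbb{Q}$ are said to be equal on $\mathcal{D}$ if $\langle\mathbb{P},\phi\rangle=\langle\mathbb{Q},\phi\rangle$ for all $\phi\in\mathcal{D}$, and $\mathcal{D}$ is "rich enough to discriminate among PMs" if equality on $\mathcal{D}$ implies $\mathbb{P}=\mathbb{Q}$. The sets $A_i(\mathbb{R})$ are the $\alpha$-level sets of $\mathbb{R}$. *)

theory Defs
  imports "HOL-Probability.Probability"
begin

definition leb_on :: "'a::euclidean_space set \<Rightarrow> 'a measure" where
  "leb_on X = restrict_space lborel X"

definition piecewise_continuous_on :: "'a::topological_space set \<Rightarrow> ('a \<Rightarrow> real) \<Rightarrow> bool" where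
  "piecewise_continuous_on X f \<longleftrightarrow>
     (\<exists>\<P>. finite \<P> \<and> disjoint \<P> \<and> \<Union>\<P> = X \<and> (\<forall>S\<in>\<P>. continuous_on S f))"

definition pc_prob_density :: "'a::euclidean_space set \<Rightarrow> ('a \<Rightarrow> real) \<Rightarrow> bool" where
  "pc_prob_density X f \<longleftrightarrow>
     f \<in> borel_measurable (leb_on X) \<and> (\<forall>x\<in>X. 0 \<le> f x) \<and>
     piecewise_continuous_on X f \<and>
     prob_space (density (leb_on X) (\<lambda>x. ennreal (f x)))"

definition level_set_diff :: "'a set \<Rightarrow> ('a \<Rightarrow> real) \<Rightarrow> (nat \<Rightarrow> real) \<Rightarrow> nat \<Rightarrow> 'a set" where
  "level_set_diff X f \<alpha> i = {x\<in>X. f x \<ge> \<alpha> i} - {x\<in>X. f x \<ge> \<alpha> (Suc i)}"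

end

theory Submission
  imports Defs
begin

lemma pc_facts:
  assumes "pc_prob_density X f"
  shows "f \<in> borel_measurable (leb_on X)" "AE x in leb_on X. 0 \<le> f x"
    "integrable (leb_on X) f" "space (leb_on X) = X"
proof -
  have sp: "space (leb_on X) = X" by (simp add: leb_on_def space_restrict_space)
  show "space (leb_on X) = X" by fact
  show m: "f \<in> borel_measurable (leb_on X)" using assms by (simp add: pc_prob_density_def)
  have nn: "\<forall>x\<in>X. 0 \<le> f x" using assms by (simp add: pc_prob_density_def)
  then show "AE x in leb_on X. 0 \<le> f x" using sp by (intro AE_I2) auto
  have ps: "prob_space (density (leb_on X) (\<lambda>x. ennreal (f x)))"
    using assms by (simp add: pc_prob_density_def)
  have "emeasure (density (leb_on X) (\<lambda>x. ennreal (f x))) (space (leb_on X)) = 1"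
    using prob_space.emeasure_space_1[OF ps] by simp
  then have "(\<integral>\<^sup>+x. ennreal (f x) \<partial>leb_on X) = 1"
    using m by (simp add: emeasure_density nn_integral_restrict_space)
  then show "integrable (leb_on X) f"
    using m nn sp by (intro integrableI_nonneg) auto
qed

theorem corollary1:
  fixes X :: "'a::euclidean_space set" and D :: "('a \<Rightarrow> real) set"
    and P Q :: "'a measure" and fP fQ :: "'a \<Rightarrow> real"
  assumes "compact X"
    and D: "\<forall>f. pc_prob_density X f \<longrightarrow>
              (\<forall>(m::nat) (\<alpha>::nat \<Rightarrow> real).
                 2 \<le> m \<and> \<alpha> 1 = 0 \<and> (\<forall>i\<in>{1..<m}. \<alpha> i < \<alpha> (Suc i)) \<longrightarrow>
                 (\<forall>i\<in>{1..<m}. indicator (level_set_diff X f \<alpha> i) \<in> D))"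
    and "pc_prob_density X fP" and "P = density (leb_on X) (\<lambda>x. ennreal (fP x))"
    and "pc_prob_density X fQ" and "Q = density (leb_on X) (\<lambda>x. ennreal (fQ x))"
    and "\<forall>\<phi>\<in>D. (\<integral>x. \<phi> x \<partial>P) = (\<integral>x. \<phi> x \<partial>Q)"
  shows "P = Q"
proof -
  define M where "M = leb_on X"
  note F = pc_facts[OF assms(3), folded M_def]
  note G = pc_facts[OF assms(5), folded M_def]
  have inD: "indicator {x\<in>X. h x < c} \<in> D" if h: "pc_prob_density X h" and c: "c > 0" for h c
  proof -
    define \<alpha> :: "nat \<Rightarrow> real" where "\<alpha> = (\<lambda>i. if i = 1 then 0 else c)"
    have "indicator (level_set_diff X h \<alpha> 1) \<in> D"
    proof -
      have "2 \<le> (2::nat) \<and> \<alpha> 1 = 0 \<and> (\<forall>i\<in>{1..<2}. \<alpha> i < \<alpha> (Suc i))"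
        using c by (auto simp: \<alpha>_def)
      moreover have "(1::nat) \<in> {1..<2}" by simp
      ultimately show ?thesis using D h by (meson D)
    qed
    moreover have "level_set_diff X h \<alpha> 1 = {x\<in>X. h x < c}"
      using h unfolding level_set_diff_def \<alpha>_def pc_prob_density_def by auto
    ultimately show ?thesis by simp
  qed
  have eqint: "(\<integral>x. fP x * indicator A x \<partial>M) = (\<integral>x. fQ x * indicator A x \<partial>M)"
    if "indicator A \<in> D" "A \<in> sets M" for A :: "'a set"
  proof -
    have "(\<integral>x. indicat_real A x \<partial>P) = (\<integral>x. indicat_real A x \<partial>Q)"
      using assms(7) that by auto
    moreover have "(\<integral>x. indicat_real A x \<partial>P) = (\<integral>x. fP x * indicat_real A x \<partial>M)"
      unfolding assms(4) M_def[symmetric]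
      by (subst integral_density) (use that F in auto)
    moreover have "(\<integral>x. indicat_real A x \<partial>Q) = (\<integral>x. fQ x * indicat_real A x \<partial>M)"
      unfolding assms(6) M_def[symmetric]
      by (subst integral_density) (use that G in auto)
    ultimately show ?thesis by simp
  qed
  have meas: "{x\<in>X. h x < c} \<in> sets M" if "h \<in> borel_measurable M" for h and c :: real
  proof -
    have "{x\<in>space M. h x < c} \<in> sets M" using that by measurable
    then show ?thesis using F(4) by simp
  qed
  have key: "AE x in M. (fP x - fQ x) * (indicator {x\<in>X. fQ x < c} x - indicator {x\<in>X. fP x < c} x) = 0"
    if c: "c > 0" for c :: real
  proof -
    define A where "A = {x\<in>X. fP x < c}"
    define B where "B = {x\<in>X. fQ x < c}"
    have A: "A \<in> sets M" "indicator A \<in> D" unfolding A_def using meas F inD assms(3) c by auto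
    have B: "B \<in> sets M" "indicator B \<in> D" unfolding B_def using meas G inD assms(5) c by auto
    have iA: "integrable M (\<lambda>x. h x * indicator A x)" if "integrable M h" for h :: "'a \<Rightarrow> real"
      using that A by (intro integrable_real_mult_indicator) auto
    have iB: "integrable M (\<lambda>x. h x * indicator B x)" if "integrable M h" for h :: "'a \<Rightarrow> real"
      using that B by (intro integrable_real_mult_indicator) auto
    have eq: "(\<lambda>x. (fP x - fQ x) * (indicator B x - indicator A x)) =
      (\<lambda>x. (fP x * indicator B x - fQ x * indicator B x) - (fP x * indicator A x - fQ x * indicator A x))"
      by (auto simp: algebra_simps)
    have int: "integrable M (\<lambda>x. (fP x - fQ x) * (indicator B x - indicator A x))"
      unfolding eq using iA iB F(3) G(3) by auto
    have "(\<integral>x. (fP x - fQ x) * (indicator B x - indicator A x) \<partial>M) = 0"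
      unfolding eq using iA iB F(3) G(3) eqint[OF A(2,1)] eqint[OF B(2,1)] by simp
    moreover have "AE x in M. 0 \<le> (fP x - fQ x) * (indicator B x - indicator A x)"
      by (intro AE_I2) (auto simp: A_def B_def indicator_def)
    ultimately show ?thesis using integral_nonneg_eq_0_iff_AE[OF int] unfolding A_def B_def by simp
  qed
  have "AE x in M. \<forall>q::rat. q > 0 \<longrightarrow> (fP x - fQ x) * (indicator {x\<in>X. fQ x < of_rat q} x - indicator {x\<in>X. fP x < of_rat q} x) = 0"
    using key by (subst AE_all_countable) auto
  then have "AE x in M. ennreal (fP x) = ennreal (fQ x)"
    using F(2) G(2) AE_space[of M]
  proof eventually_elim
    case (elim x)
    have xX: "x \<in> X" using elim F(4) by simp
    show ?case
    proof (rule ccontr)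
      assume "ennreal (fP x) \<noteq> ennreal (fQ x)"
      then have ne: "fP x \<noteq> fQ x" by auto
      show False
      proof (cases "fP x < fQ x")
        case True
        obtain q where q: "fP x < of_rat q" "of_rat q < fQ x" using of_rat_dense[OF True] by blast
        then have "q > 0" using elim by (metis le_less_trans of_rat_less_0_iff not_less order_less_trans zero_less_of_rat_iff)
        then show False using elim(1) q xX by (auto simp: indicator_def)
      next
        case False
        then have lt: "fQ x < fP x" using ne by auto
        obtain q where q: "fQ x < of_rat q" "of_rat q < fP x" using of_rat_dense[OF lt] by blast
        then have "q > 0" using elim by (metis le_less_trans not_less zero_less_of_rat_iff)
        then show False using elim(1) q xX by (auto simp: indicator_def)
      qed
    qed
  qed
  then show ?thesis unfolding assms(4,6) M_def[symmetric]
    using F(1) G(1) by (intro density_cong) auto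
qed

end
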